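(* Let $k\in\mathbb{N}$ and let $\ell\colon(0,\infty)\to[0,\infty)$ be continuously differentiable on its open support $\operatorname{supp}\ell$ with $\ell'(t)<0$ for all $t\in\operatorname{supp}\ell$. Define $\psi\colon\operatorname{supp}\ell\to\mathbb{R}$ by $\psi(t)=\dfrac{t\,\ell'(t)}{\ell(t)^{1-1/k}}$. Then $\ell\in\Lambda_k$ if and only if $\psi$ is decreasing.
   Context: $\operatorname{supp}\ell=(0,\sup\{t>0:\ell(t)>0\})$. The class $\Lambda_k$ ($k\in\mathbb{N}$) consists of all continuous $\ell\colon(0,\infty)\to[0,\infty]$ such that (i) $\ell$ is strictly decreasing on $\operatorname{supp}\ell$, so that the inverse $\ell^{-1}$ exists on $(0,\|\ell\|_\infty)$ with $\|\ell\|_\infty=\sup_{s>0}\ell(s)$; and (ii) the function $g\colon(0,\|\ell\|_\infty^{1/k})\to\operatorname{supp}\ell$, $g(s)=\ell^{-1}(s^k)$, is log-concave (i.e. $\log g$ is concave). *)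

theory Defs
  imports "HOL-Analysis.Analysis"
begin

text \<open>Open support: supp l = (0, sup {t>0. l t > 0}) (empty if l vanishes on (0,oo)).
  Note t < sup S iff t < s for some s in S.\<close>
definition supp_fun :: "(real \<Rightarrow> real) \<Rightarrow> real set" where
  "supp_fun l = {t. 0 < t \<and> (\<exists>s. 0 < s \<and> 0 < l s \<and> t < s)}"

text \<open>Domain of g: (0, norm_inf(l)^(1/k)), i.e. s > 0 with s^k < sup_{t>0} l t
  (this also covers norm_inf(l) = oo).\<close>
definition g_dom :: "nat \<Rightarrow> (real \<Rightarrow> real) \<Rightarrow> real set" where
  "g_dom k l = {s. 0 < s \<and> (\<exists>t. 0 < t \<and> s ^ k < l t)}"

definition g_fun :: "nat \<Rightarrow> (real \<Rightarrow> real) \<Rightarrow> real \<Rightarrow> real" where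
  "g_fun k l s = the_inv_into (supp_fun l) l (s ^ k)"

definition Lambda :: "nat \<Rightarrow> (real \<Rightarrow> real) set" where
  "Lambda k = {l. continuous_on {0<..} l
      \<and> (\<forall>s\<in>supp_fun l. \<forall>t\<in>supp_fun l. s < t \<longrightarrow> l t < l s)
      \<and> (\<forall>s\<in>g_dom k l. \<exists>t\<in>supp_fun l. l t = s ^ k)
      \<and> concave_on (g_dom k l) (\<lambda>s. ln (g_fun k l s))}"

end

theory Submission
  imports Defs
begin

lemma concave_inv:
  fixes f g :: "real \<Rightarrow> real"
  assumes cA: "convex A" and cB: "convex B" and fA: "\<forall>x\<in>A. f x \<in> B" and gB: "\<forall>y\<in>B. g y \<in> A"
    and gf: "\<forall>x\<in>A. g (f x) = x" and fg: "\<forall>y\<in>B. f (g y) = y"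
    and mono: "\<forall>x\<in>B. \<forall>y\<in>B. x \<le> y \<longrightarrow> g y \<le> g x"
    and conc: "concave_on A f"
  shows "concave_on B g"
  unfolding concave_on_iff
proof (intro conjI cB ballI allI impI)
  fix y1 y2 u v :: real
  assume y: "y1 \<in> B" "y2 \<in> B" and uv: "0 \<le> u" "0 \<le> v" "u + v = 1"
  define z where "z = u *\<^sub>R g y1 + v *\<^sub>R g y2"
  have zA: "z \<in> A" unfolding z_def using cA gB y uv by (simp add: convex_def)
  have "f z \<ge> u * f (g y1) + v * f (g y2)"
    using conc gB y uv unfolding concave_on_iff z_def by blast
  hence w: "f z \<ge> u *\<^sub>R y1 + v *\<^sub>R y2" using fg y by simp
  have wB: "u *\<^sub>R y1 + v *\<^sub>R y2 \<in> B" using cB y uv by (simp add: convex_def)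
  have "g (f z) \<le> g (u *\<^sub>R y1 + v *\<^sub>R y2)" using mono w wB fA zA by blast
  thus "g (u *\<^sub>R y1 + v *\<^sub>R y2) \<ge> u * g y1 + v * g y2" using gf zA z_def by simp
qed

theorem mainTheorem9:
  fixes k :: nat and l :: "real \<Rightarrow> real"
  assumes k: "k \<ge> 1"
    and nonneg: "\<forall>t>0. 0 \<le> l t"
    and cont: "continuous_on {0<..} l"
    and diff: "\<forall>t\<in>supp_fun l. l differentiable (at t)"
    and C1: "continuous_on (supp_fun l) (deriv l)"
    and neg: "\<forall>t\<in>supp_fun l. deriv l t < 0"
  shows "l \<in> Lambda k \<longleftrightarrow>
    antimono_on (supp_fun l) (\<lambda>t. t * deriv l t / (l t powr (1 - 1 / real k)))"
proof -
  define S where "S = supp_fun l"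
  define V where "V = g_dom k l"
  define U where "U = {u. exp u \<in> S}"
  define \<psi> where "\<psi> = (\<lambda>t. t * deriv l t / (l t powr (1 - 1 / real k)))"
  define \<phi> where "\<phi> = (\<lambda>u. l (exp u) powr (1 / real k))"
  define \<phi>' where "\<phi>' = (\<lambda>u. \<psi> (exp u) / real k)"
  define h where "h = (\<lambda>s. ln (g_fun k l s))"
  have kpos: "real k > 0" using k by simp
  have Sdef: "t \<in> S \<longleftrightarrow> 0 < t \<and> (\<exists>s. 0 < s \<and> 0 < l s \<and> t < s)" for t
    unfolding S_def supp_fun_def by simp
  have Sint: "x \<in> S" if "a \<in> S" "b \<in> S" "a \<le> x" "x \<le> b" for a b x
    using that unfolding Sdef by (meson less_le_trans le_less_trans)
  have dl: "(l has_real_derivative deriv l t) (at t)" if "t \<in> S" for t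
    using diff that S_def DERIV_deriv_iff_real_differentiable by blast
  have strict: "l t < l s" if "s \<in> S" "t \<in> S" "s < t" for s t
  proof -
    have "\<forall>x. s \<le> x \<and> x \<le> t \<longrightarrow> (\<exists>y. DERIV l x :> y \<and> y < 0)"
      using Sint[OF that(1,2)] dl neg S_def by blast
    thus ?thesis using DERIV_neg_imp_decreasing[OF that(3)] by blast
  qed
  have Spos: "0 < l t" if tS: "t \<in> S" for t
  proof -
    obtain s where s: "0 < s" "0 < l s" "t < s" using tS unfolding Sdef by blast
    have "0 < t" using tS unfolding Sdef by blast
    hence m: "(t + s) / 2 \<in> S" unfolding Sdef using s by (intro conjI exI[of _ s]) auto
    have "l ((t + s) / 2) < l t" using strict[OF tS m] s by simp
    moreover have "0 \<le> l ((t + s) / 2)" using nonneg \<open>0 < t\<close> s by simp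
    ultimately show ?thesis by linarith
  qed
  have Sback: "t \<in> S" if tp: "0 < t" "0 < l t" for t
  proof -
    have "isCont l t" using cont tp(1) continuous_on_eq_continuous_at[of "{0<..}" l] by auto
    then obtain d where d: "d > 0" "\<forall>y. dist y t < d \<longrightarrow> dist (l y) (l t) < l t"
      using tp(2) unfolding continuous_at_eps_delta by blast
    have "dist (l (t + d/2)) (l t) < l t" using d by (simp add: dist_real_def)
    hence "0 < l (t + d/2)" by (simp add: dist_real_def)
    thus ?thesis unfolding Sdef using tp d by (intro conjI exI[of _ "t + d/2"]) auto
  qed
  have Schar: "t \<in> S \<longleftrightarrow> 0 < t \<and> 0 < l t" for t
    using Sback Spos unfolding Sdef by blast
  have dphi: "(\<phi> has_real_derivative \<phi>' u) (at u)" if uU: "u \<in> U" for u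
  proof -
    have eS: "exp u \<in> S" using uU U_def by simp
    have L: "0 < l (exp u)" using Spos[OF eS] .
    have "((\<lambda>u. l (exp u)) has_real_derivative deriv l (exp u) * exp u) (at u)"
      using DERIV_chain2[OF dl[OF eS] DERIV_exp] .
    from DERIV_fun_powr[OF this L, of "1 / real k"]
    have D: "(\<phi> has_real_derivative 1 / real k * l (exp u) powr (1 / real k - 1) * (deriv l (exp u) * exp u)) (at u)"
      unfolding \<phi>_def by simp
    have pw: "l (exp u) powr (1 / real k - 1) = inverse (l (exp u) powr (1 - 1 / real k))"
      using powr_minus[of "l (exp u)" "1 - 1 / real k"] by simp
    have P: "l (exp u) powr (1 - 1 / real k) > 0" using L by simp
    have "1 / real k * l (exp u) powr (1 / real k - 1) * (deriv l (exp u) * exp u) = \<phi>' u"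
      unfolding \<phi>'_def \<psi>_def pw using kpos P by (simp add: field_simps)
    thus ?thesis using D by simp
  qed
  have Uopen: "open U"
  proof -
    have "U = (\<Union>s\<in>{s. 0 < s \<and> 0 < l s}. {..<ln s})"
    proof -
      have e: "exp u < s \<longleftrightarrow> u < ln s" if "0 < s" for u s :: real
        using that by (metis exp_less_cancel_iff exp_ln)
      show ?thesis unfolding U_def Sdef using e by auto
    qed
    thus ?thesis by (metis open_UN open_lessThan)
  qed
  have Uconv: "convex U"
  proof -
    have "x \<in> U" if "a \<in> U" "b \<in> U" "a \<le> x" "x \<le> b" for a b x
      using Sint[of "exp a" "exp b" "exp x"] that unfolding U_def by simp
    thus ?thesis unfolding is_interval_convex_1[symmetric] is_interval_1 by blast
  qed
  have Vconv: "convex V"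
  proof -
    have "x \<in> V" if ab: "a \<in> V" "b \<in> V" "a \<le> x" "x \<le> b" for a b x
    proof -
      obtain t where t: "0 < t" "b ^ k < l t" using ab(2) unfolding V_def g_dom_def by blast
      have "x ^ k \<le> b ^ k" using ab unfolding V_def g_dom_def by (auto intro: power_mono)
      thus ?thesis using ab t unfolding V_def g_dom_def by auto
    qed
    thus ?thesis unfolding is_interval_convex_1[symmetric] is_interval_1 by blast
  qed
  have conn: "connected U" using Uconv convex_connected by blast
  have tangent: "\<phi> x \<le> \<phi> c + \<phi>' c * (x - c)" if conc: "concave_on U \<phi>" and cx: "c \<in> U" "x \<in> U" for c x
  proof -
    have cv: "convex_on U (\<lambda>x. - \<phi> x)" using conc unfolding concave_on_def .
    have ci: "c \<in> interior U" using cx Uopen interior_open by blast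
    have "((\<lambda>x. - \<phi> x) has_field_derivative - \<phi>' c) (at c within U)"
      using DERIV_minus[OF dphi[OF cx(1)]] has_field_derivative_at_within by blast
    from convex_on_imp_above_tangent[OF cv conn ci cx(2) this] show ?thesis by (simp add: algebra_simps)
  qed
  have A: "antimono_on S \<psi> \<longleftrightarrow> (\<forall>x\<in>U. \<forall>y\<in>U. x \<le> y \<longrightarrow> \<phi>' y \<le> \<phi>' x)"
  proof
    assume m: "antimono_on S \<psi>"
    show "\<forall>x\<in>U. \<forall>y\<in>U. x \<le> y \<longrightarrow> \<phi>' y \<le> \<phi>' x"
    proof (intro ballI impI)
      fix x y assume "x \<in> U" "y \<in> U" "x \<le> y"
      hence "\<psi> (exp y) \<le> \<psi> (exp x)" using m unfolding U_def monotone_on_def by simp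
      thus "\<phi>' y \<le> \<phi>' x" unfolding \<phi>'_def using kpos by (simp add: divide_right_mono)
    qed
  next
    assume m: "\<forall>x\<in>U. \<forall>y\<in>U. x \<le> y \<longrightarrow> \<phi>' y \<le> \<phi>' x"
    show "antimono_on S \<psi>" unfolding monotone_on_def
    proof (intro ballI impI)
      fix x y assume xy: "x \<in> S" "y \<in> S" "x \<le> y"
      have p: "0 < x" "0 < y" using xy Schar by auto
      have "ln x \<in> U" "ln y \<in> U" "ln x \<le> ln y" using xy p unfolding U_def by auto
      hence "\<phi>' (ln y) \<le> \<phi>' (ln x)" using m by blast
      thus "\<psi> y \<le> \<psi> x" unfolding \<phi>'_def using kpos p by (simp add: divide_le_cancel)
    qed
  qed
  have B: "concave_on U \<phi> \<longleftrightarrow> (\<forall>x\<in>U. \<forall>y\<in>U. x \<le> y \<longrightarrow> \<phi>' y \<le> \<phi>' x)"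
  proof
    assume m: "\<forall>x\<in>U. \<forall>y\<in>U. x \<le> y \<longrightarrow> \<phi>' y \<le> \<phi>' x"
    have "convex_on U (\<lambda>x. - \<phi> x)"
    proof (rule convex_on_realI[OF conn])
      show "((\<lambda>x. - \<phi> x) has_real_derivative - \<phi>' x) (at x)" if "x \<in> U" for x
        using DERIV_minus[OF dphi[OF that]] .
      show "- \<phi>' x \<le> - \<phi>' y" if "x \<in> U" "y \<in> U" "x \<le> y" for x y
        using m that by auto
    qed
    thus "concave_on U \<phi>" unfolding concave_on_def .
  next
    assume conc: "concave_on U \<phi>"
    show "\<forall>x\<in>U. \<forall>y\<in>U. x \<le> y \<longrightarrow> \<phi>' y \<le> \<phi>' x"
    proof (intro ballI impI)
      fix x y assume xy: "x \<in> U" "y \<in> U" "x \<le> y"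
      show "\<phi>' y \<le> \<phi>' x"
      proof (cases "x = y")
        case False
        have "\<phi> y \<le> \<phi> x + \<phi>' x * (y - x)" using tangent[OF conc xy(1,2)] .
        moreover have "\<phi> x \<le> \<phi> y + \<phi>' y * (x - y)" using tangent[OF conc xy(2,1)] .
        ultimately have "(\<phi>' y - \<phi>' x) * (y - x) \<le> 0" by (simp add: algebra_simps)
        moreover have "y - x > 0" using xy False by simp
        ultimately show ?thesis by (simp add: mult_le_0_iff)
      qed simp
    qed
  qed
  have rootk: "(x powr (1 / real k)) ^ k = x" if "0 < x" for x
  proof -
    have "(x powr (1 / real k)) ^ k = (x powr (1 / real k)) powr real k"
      using that by (simp add: powr_realpow)
    also have "\<dots> = x" using that kpos by (simp add: powr_powr)
    finally show ?thesis .
  qed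
  have phik: "\<phi> u ^ k = l (exp u)" "0 < \<phi> u" if "u \<in> U" for u
  proof -
    have L: "0 < l (exp u)" using Spos that U_def by simp
    show "\<phi> u ^ k = l (exp u)" unfolding \<phi>_def using rootk[OF L] .
    show "0 < \<phi> u" unfolding \<phi>_def using L by simp
  qed
  have third: "\<forall>s\<in>V. \<exists>t\<in>S. l t = s ^ k" if conc: "concave_on U \<phi>"
  proof
    fix s assume sV: "s \<in> V"
    obtain t0 where t0: "0 < t0" "s ^ k < l t0" and spos: "0 < s" using sV unfolding V_def g_dom_def by blast
    have skpos: "0 < s ^ k" using spos by simp
    have "\<exists>t1>0. l t1 < s ^ k"
    proof (cases "\<forall>t>0. t \<in> S")
      case True
      have U1: "u \<in> U" for u using True unfolding U_def by simp
      have oneS: "1 \<in> S" using True by simp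
      have "\<psi> 1 < 0" unfolding \<psi>_def using neg oneS Spos[OF oneS] S_def
        by (simp add: divide_neg_pos)
      hence d0: "\<phi>' 0 < 0" unfolding \<phi>'_def using kpos by (simp add: divide_neg_pos)
      define u where "u = (\<phi> 0 - s) / (- \<phi>' 0) + 1"
      have "\<phi>' 0 * u = - (\<phi> 0 - s) + \<phi>' 0" unfolding u_def using d0 by (simp add: field_simps)
      hence "\<phi> u < s" using tangent[OF conc U1[of 0] U1[of u]] d0 by simp
      hence "\<phi> u ^ k < s ^ k" using power_strict_mono[OF _ less_imp_le[OF phik(2)[OF U1[of u]]], of s k] k by simp
      hence "l (exp u) < s ^ k" using phik(1)[OF U1] by simp
      thus ?thesis by (intro exI[of _ "exp u"]) simp
    next
      case False
      then obtain t where t: "0 < t" "t \<notin> S" by blast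
      hence "l t \<le> 0" using Schar by auto
      thus ?thesis using t skpos by (intro exI[of _ t]) simp
    qed
    then obtain t1 where t1: "0 < t1" "l t1 < s ^ k" by blast
    have "\<exists>t. min t0 t1 \<le> t \<and> l t = s ^ k"
    proof (cases "t0 \<le> t1")
      case True
      have "continuous_on {t0..t1} l" using t0 by (intro continuous_on_subset[OF cont]) auto
      from IVT2'[of l t1 "s ^ k" t0, OF _ _ True this] t0 t1 show ?thesis by force
    next
      case False
      have "continuous_on {t1..t0} l" using t1 by (intro continuous_on_subset[OF cont]) auto
      from IVT'[of l t1 "s ^ k" t0, OF _ _ _ this] t0 t1 False show ?thesis by force
    qed
    then obtain t where t: "min t0 t1 \<le> t" "l t = s ^ k" by blast
    have "0 < t" using t t0 t1 by linarith
    hence "t \<in> S" using Schar t skpos by simp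
    thus "\<exists>t\<in>S. l t = s ^ k" using t by blast
  qed
  have inj: "inj_on l S"
  proof (rule inj_onI, rule ccontr)
    fix x y assume xy: "x \<in> S" "y \<in> S" "l x = l y" "x \<noteq> y"
    show False
    proof (cases "x < y")
      case True thus False using strict[OF xy(1,2)] xy(3) by simp
    next
      case False hence "y < x" using xy(4) by simp
      thus False using strict[OF xy(2,1)] xy(3) by simp
    qed
  qed
  have phimono: "\<phi> y \<le> \<phi> x" if "x \<in> U" "y \<in> U" "x \<le> y" for x y
  proof (cases "x = y")
    case False
    hence "l (exp y) < l (exp x)" using strict[of "exp x" "exp y"] that U_def by simp
    moreover have "0 \<le> l (exp y)" using nonneg by simp
    ultimately show ?thesis unfolding \<phi>_def using kpos by (intro powr_mono2) auto
  qed simp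
  have phistrict: "\<phi> y < \<phi> x" if "x \<in> U" "y \<in> U" "x < y" for x y
  proof -
    have "l (exp y) < l (exp x)" using strict[of "exp x" "exp y"] that U_def by simp
    moreover have "0 \<le> l (exp y)" using nonneg by simp
    ultimately show ?thesis unfolding \<phi>_def using kpos by (intro powr_less_mono2) auto
  qed
  have phiV: "\<phi> u \<in> V" if uU: "u \<in> U" for u
  proof -
    have eS: "exp u \<in> S" using uU U_def by simp
    then obtain w where w: "0 < w" "0 < l w" "exp u < w" unfolding Sdef by blast
    have hS: "exp u / 2 \<in> S" unfolding Sdef using w by (intro conjI exI[of _ w]) auto
    have "l (exp u) < l (exp u / 2)" using strict[OF hS eS] by simp
    thus ?thesis unfolding V_def g_dom_def using phik[OF uU]
      by (intro CollectI conjI exI[of _ "exp u / 2"]) auto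
  qed
  have hphi: "h (\<phi> u) = u" if uU: "u \<in> U" for u
  proof -
    have eS: "exp u \<in> S" using uU U_def by simp
    have "g_fun k l (\<phi> u) = exp u" unfolding g_fun_def phik(1)[OF uU] S_def[symmetric]
      using the_inv_into_f_f[OF inj eS] .
    thus ?thesis unfolding h_def by simp
  qed
  have key: "concave_on V h \<longleftrightarrow> concave_on U \<phi>" if th: "\<forall>s\<in>V. \<exists>t\<in>S. l t = s ^ k"
  proof -
    have gS: "g_fun k l s \<in> S \<and> l (g_fun k l s) = s ^ k" if sV: "s \<in> V" for s
    proof -
      obtain t where t: "t \<in> S" "l t = s ^ k" using th sV by blast
      have "g_fun k l s = t" unfolding g_fun_def S_def[symmetric] using the_inv_into_f_eq[OF inj t(2) t(1)] .
      thus ?thesis using t by simp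
    qed
    have hU: "h s \<in> U" if sV: "s \<in> V" for s
    proof -
      have "0 < g_fun k l s" using gS[OF sV] Schar by blast
      thus ?thesis using gS[OF sV] unfolding U_def h_def by simp
    qed
    have phih: "\<phi> (h s) = s" if sV: "s \<in> V" for s
    proof -
      have sp: "0 < s" using sV unfolding V_def g_dom_def by blast
      have g0: "0 < g_fun k l s" using gS[OF sV] Schar by blast
      have "\<phi> (h s) = (s ^ k) powr (1 / real k)" unfolding \<phi>_def h_def using g0 gS[OF sV] by simp
      also have "\<dots> = (s powr real k) powr (1 / real k)" using sp by (simp add: powr_realpow)
      also have "\<dots> = s" using kpos sp by (simp add: powr_powr)
      finally show ?thesis .
    qed
    have hmono: "\<forall>x\<in>V. \<forall>y\<in>V. x \<le> y \<longrightarrow> h y \<le> h x"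
    proof (intro ballI impI)
      fix x y assume xy: "x \<in> V" "y \<in> V" "x \<le> y"
      show "h y \<le> h x"
      proof (rule ccontr)
        assume "\<not> h y \<le> h x"
        hence "\<phi> (h y) < \<phi> (h x)" using phistrict[OF hU[OF xy(1)] hU[OF xy(2)]] by simp
        thus False using phih xy by simp
      qed
    qed
    have pmono: "\<forall>x\<in>U. \<forall>y\<in>U. x \<le> y \<longrightarrow> \<phi> y \<le> \<phi> x" using phimono by blast
    show ?thesis
    proof
      assume "concave_on V h"
      thus "concave_on U \<phi>"
        using concave_inv[OF Vconv Uconv _ _ _ _ pmono] hU phiV hphi phih by blast
    next
      assume "concave_on U \<phi>"
      thus "concave_on V h"
        using concave_inv[OF Uconv Vconv _ _ _ _ hmono] hU phiV hphi phih by blast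
    qed
  qed
  have LamIff: "l \<in> Lambda k \<longleftrightarrow> (\<forall>s\<in>V. \<exists>t\<in>S. l t = s ^ k) \<and> concave_on V h"
    unfolding Lambda_def V_def h_def S_def using cont strict[unfolded S_def] by auto
  have "l \<in> Lambda k \<longleftrightarrow> antimono_on S \<psi>"
  proof
    assume "l \<in> Lambda k"
    hence "concave_on U \<phi>" using LamIff key by blast
    thus "antimono_on S \<psi>" using A B by blast
  next
    assume "antimono_on S \<psi>"
    hence c: "concave_on U \<phi>" using A B by blast
    hence "\<forall>s\<in>V. \<exists>t\<in>S. l t = s ^ k" using third by blast
    thus "l \<in> Lambda k" using LamIff key c by blast
  qed
  thus ?thesis unfolding S_def \<psi>_def .
qed

end
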